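(* Let $f : \widehat{\mathbb{Z}} \to \widehat{\mathbb{Z}}$ be congruence preserving and $s \in \widehat{\mathbb{Z}}$. Then the map $f{\Uparrow}_s : \widehat{\mathbb{Z}} \to \widehat{\mathbb{Z}}$ is profinite preperiodic. Moreover, if $f$ is tower-stable, then for every $t \in \widehat{\mathbb{Z}}$ the map $(f{\Uparrow}_s){\Uparrow}_t : \widehat{\mathbb{Z}} \to \widehat{\mathbb{Z}}$ is constant, and this constant is independent of $t$.
   Context: $\mathbb{N}=\{1,2,\dots\}$, $\widehat{\mathbb{Z}} = \varprojlim_n \mathbb{Z}/n\mathbb{Z}$; $s\equiv_n t$ means $s-t\in n\widehat{\mathbb{Z}}$; $\widehat{\cdot}:\mathbb{N}\to\widehat{\mathbb{Z}}$ is the natural embedding. A continuous $f$ is congruence preserving if $s\equiv_n t$ implies $f(s)\equiv_n f(t)$ for all $s,t$, $n$; it then induces reductions $f_n:\mathbb{Z}/n\mathbb{Z}\to\mathbb{Z}/n\mathbb{Z}$; $\lambda_f(n)$ is the period of $f_n$ (lcm of the cycle lengths of all points, the cycle length of $x$ being the least $l\ge1$ with $f_n^k(x)=f_n^{k+l}(x)$ for some $k\ge0$). $f$ is tower-stable if for every prime $p$ the largest prime-power divisor of $\lambda_f(p)$ is $< p$ (equivalently, $f_p$ is not a cyclic permutation of length $p$). A continuous map $g:\widehat{\mathbb{Z}}\to\widehat{\mathbb{Z}}$ is profinite preperiodic if for every $x\in\widehat{\mathbb{Z}}$, every $u\in\widehat{\mathbb{Z}}$ and every sequence of positive integers $n_i\to+\infty$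 in $\mathbb{R}$ with $\widehat{n_i}\to u$ in $\widehat{\mathbb{Z}}$, the limit $\lim_i g^{n_i}(x)$ exists and depends only on $u$; in that case $g{\Uparrow}_x:\widehat{\mathbb{Z}}\to\widehat{\mathbb{Z}}$ denotes the (continuous) map $u \mapsto \lim_i g^{n_i}(x)$. Congruence preserving maps are profinite preperiodic, so $f{\Uparrow}_s$ is defined. *)

theory Defs
  imports "HOL-Computational_Algebra.Primes"
begin

text \<open>An element of the profinite completion is a compatible family of residues:
  component n (n \<ge> 1) lies in {0..<n}, and for n dvd m the component at m reduces
  to the component at n. Component 0 is fixed to 0 (unused).\<close>

definition zhat_rep :: "(nat \<Rightarrow> nat) set" where
  "zhat_rep = {x. x 0 = 0 \<and> (\<forall>n>0. x n < n) \<and>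
                 (\<forall>n m. 0 < m \<longrightarrow> n dvd m \<longrightarrow> x m mod n = x n)}"

typedef zhat = zhat_rep
  by (rule exI[of _ "\<lambda>_. 0"]) (simp add: zhat_rep_def)

definition zproj :: "zhat \<Rightarrow> nat \<Rightarrow> nat" where
  "zproj x n = Rep_zhat x n"

definition zcong :: "nat \<Rightarrow> zhat \<Rightarrow> zhat \<Rightarrow> bool" where
  "zcong n s t \<longleftrightarrow> zproj s n = zproj t n"

definition zhat_of_nat :: "nat \<Rightarrow> zhat" where
  "zhat_of_nat k = Abs_zhat (\<lambda>n. if n = 0 then 0 else k mod n)"

definition ztendsto :: "(nat \<Rightarrow> zhat) \<Rightarrow> zhat \<Rightarrow> bool" where
  "ztendsto X u \<longleftrightarrow> (\<forall>n>0. eventually (\<lambda>i. zcong n (X i) u) sequentially)"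

text \<open>Continuity in the profinite topology (basic neighbourhoods x + m Zhat).\<close>
definition zcontinuous :: "(zhat \<Rightarrow> zhat) \<Rightarrow> bool" where
  "zcontinuous g \<longleftrightarrow>
     (\<forall>x. \<forall>n>0. \<exists>m>0. \<forall>y. zcong m y x \<longrightarrow> zcong n (g y) (g x))"

definition congruence_preserving :: "(zhat \<Rightarrow> zhat) \<Rightarrow> bool" where
  "congruence_preserving f \<longleftrightarrow> zcontinuous f \<and>
     (\<forall>n>0. \<forall>s t. zcong n s t \<longrightarrow> zcong n (f s) (f t))"

definition adm_seq :: "(nat \<Rightarrow> nat) \<Rightarrow> zhat \<Rightarrow> bool" where
  "adm_seq ns u \<longleftrightarrow> (\<forall>i. 0 < ns i) \<and> filterlim ns at_top sequentially \<and>
                     ztendsto (\<lambda>i. zhat_of_nat (ns i)) u"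

definition profinite_preperiodic :: "(zhat \<Rightarrow> zhat) \<Rightarrow> bool" where
  "profinite_preperiodic g \<longleftrightarrow> zcontinuous g \<and>
     (\<forall>x u. \<exists>L. \<forall>ns. adm_seq ns u \<longrightarrow> ztendsto (\<lambda>i. (g ^^ ns i) x) L)"

text \<open>g\<Up>_x (u) = lim g^{n_i}(x) for admissible n_i.\<close>
definition zup :: "(zhat \<Rightarrow> zhat) \<Rightarrow> zhat \<Rightarrow> zhat \<Rightarrow> zhat" where
  "zup g x u = (SOME L. \<forall>ns. adm_seq ns u \<longrightarrow> ztendsto (\<lambda>i. (g ^^ ns i) x) L)"

definition red :: "(zhat \<Rightarrow> zhat) \<Rightarrow> nat \<Rightarrow> nat \<Rightarrow> nat" where
  "red f n a = zproj (f (zhat_of_nat a)) n"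

definition cycle_length :: "(nat \<Rightarrow> nat) \<Rightarrow> nat \<Rightarrow> nat" where
  "cycle_length h x = (LEAST l. 1 \<le> l \<and> (\<exists>k. (h ^^ k) x = (h ^^ (k + l)) x))"

definition period :: "(zhat \<Rightarrow> zhat) \<Rightarrow> nat \<Rightarrow> nat" where
  "period f n = Lcm ((cycle_length (red f n)) ` {..<n})"

definition tower_stable :: "(zhat \<Rightarrow> zhat) \<Rightarrow> bool" where
  "tower_stable f \<longleftrightarrow> (\<forall>p::nat. prime p \<longrightarrow>
     (\<forall>q k. prime (q::nat) \<and> q ^ k dvd period f p \<longrightarrow> q ^ k < p))"

end

theory Submission
  imports Defs
begin

lemma zproj_rep: "Rep_zhat x \<in> zhat_rep"
  by (rule Rep_zhat)

lemma zproj_lt: "0 < n \<Longrightarrow> zproj x n < n"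
  using zproj_rep[of x] by (simp add: zproj_def zhat_rep_def)

lemma zproj_0: "zproj x 0 = 0"
  using zproj_rep[of x] by (simp add: zproj_def zhat_rep_def)

lemma zproj_dvd: "0 < m \<Longrightarrow> d dvd m \<Longrightarrow> zproj x m mod d = zproj x d"
  using zproj_rep[of x] by (simp add: zproj_def zhat_rep_def)

lemma zproj_1: "zproj x 1 = 0"
  using zproj_lt[of 1 x] by simp

lemma zproj_Suc0: "zproj x (Suc 0) = 0"
  using zproj_1 by simp

lemma zhat_eq:
  assumes "\<And>n. 0 < n \<Longrightarrow> zproj x n = zproj y n"
  shows "x = y"
proof -
  have "Rep_zhat x = Rep_zhat y"
  proof
    fix n show "Rep_zhat x n = Rep_zhat y n"
      using assms[of n] zproj_0[of x] zproj_0[of y]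
      by (cases "n = 0") (auto simp: zproj_def)
  qed
  then show ?thesis by (simp add: Rep_zhat_inject)
qed

lemma zproj_Abs: "F \<in> zhat_rep \<Longrightarrow> zproj (Abs_zhat F) n = F n"
  by (simp add: zproj_def Abs_zhat_inverse)

lemma zproj_of_nat: "0 < n \<Longrightarrow> zproj (zhat_of_nat k) n = k mod n"
proof -
  have "(\<lambda>n. if n = 0 then 0 else k mod n) \<in> zhat_rep"
    by (auto simp: zhat_rep_def mod_mod_cancel)
  then show "0 < n \<Longrightarrow> ?thesis"
    by (simp add: zhat_of_nat_def zproj_Abs)
qed

lemma zcong_dvd: "0 < m \<Longrightarrow> d dvd m \<Longrightarrow> zcong m x y \<Longrightarrow> zcong d x y"
  unfolding zcong_def by (metis zproj_dvd)

lemma zcong_1: "zcong 1 x y"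
  unfolding zcong_def by (metis zproj_1)

lemma pigeon:
  fixes c :: "nat \<Rightarrow> nat"
  assumes "\<forall>i\<le>q. c i < q"
  shows "\<exists>i j. i < j \<and> j \<le> q \<and> c i = c j"
proof (rule ccontr)
  assume H: "\<not> ?thesis"
  have "inj_on c {..q}"
  proof (rule inj_onI)
    fix i j assume "i \<in> {..q}" "j \<in> {..q}" "c i = c j"
    then show "i = j" using H by (metis atMost_iff linorder_neqE_nat)
  qed
  moreover have "c ` {..q} \<subseteq> {..<q}" using assms by auto
  ultimately have "card {..q} \<le> card {..<q}" by (intro card_inj_on_le) auto
  then show False by simp
qed

lemma periodic_add:
  fixes N P n t :: nat
  assumes "\<forall>n\<ge>N. a (n + P) = a n" "N \<le> n"
  shows "a (n + t * P) = a n"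
proof (induction t)
  case 0 then show ?case by simp
next
  case (Suc t)
  have "a (n + Suc t * P) = a ((n + t * P) + P)" by (simp add: algebra_simps)
  also have "\<dots> = a (n + t * P)" using assms by simp
  finally show ?case using Suc by simp
qed

lemma periodic_eq:
  fixes N P n n' :: nat
  assumes "\<forall>n\<ge>N. a (n + P) = a n" "N \<le> n" "N \<le> n'" "n mod P = n' mod P"
  shows "a n = a n'"
proof -
  have gen: "a x = a y" if "N \<le> x" "x \<le> y" "y mod P = x mod P" for x y
  proof -
    have "P dvd y - x" using that mod_eq_dvd_iff_nat by blast
    then obtain t where "y - x = P * t" by (auto elim: dvdE)
    then have "y = x + t * P" using that by (simp add: algebra_simps)
    then show ?thesis using periodic_add[OF assms(1) that(1)] by simp
  qed
  show ?thesis
  proof (cases "n \<le> n'")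
    case True then show ?thesis using gen[of n n'] assms by simp
  next
    case False then show ?thesis using gen[of n' n] assms by simp
  qed
qed

section \<open>Admissible sequences and limits\<close>

definition ns0 :: "zhat \<Rightarrow> nat \<Rightarrow> nat" where
  "ns0 u i = fact i + zproj u (fact i)"

lemma adm_ns0: "adm_seq (ns0 u) u"
  unfolding adm_seq_def
proof (intro conjI allI)
  fix i show "0 < ns0 u i" by (simp add: ns0_def)
next
  show "filterlim (ns0 u) at_top sequentially"
    unfolding filterlim_at_top
  proof
    fix Z :: nat
    have "\<forall>i\<ge>Z. Z \<le> ns0 u i"
    proof (intro allI impI)
      fix i assume "Z \<le> i"
      also have "i \<le> fact i" by (rule fact_ge_self)
      also have "\<dots> \<le> ns0 u i" by (simp add: ns0_def)
      finally show "Z \<le> ns0 u i" .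
    qed
    then show "eventually (\<lambda>i. Z \<le> ns0 u i) sequentially"
      by (auto simp: eventually_sequentially)
  qed
next
  show "ztendsto (\<lambda>i. zhat_of_nat (ns0 u i)) u"
    unfolding ztendsto_def
  proof (intro allI impI)
    fix n :: nat assume n: "0 < n"
    have "zcong n (zhat_of_nat (ns0 u i)) u" if "n \<le> i" for i
    proof -
      have d: "n dvd fact i" using n that by (intro dvd_fact) auto
      have "zproj (zhat_of_nat (ns0 u i)) n = (fact i + zproj u (fact i)) mod n"
        using n by (simp add: zproj_of_nat ns0_def)
      also have "\<dots> = zproj u (fact i) mod n" using d by (simp add: mod_add_left_eq[symmetric])
      also have "\<dots> = zproj u n" using d by (intro zproj_dvd) auto
      finally show ?thesis by (simp add: zcong_def)
    qed
    then show "eventually (\<lambda>i. zcong n (zhat_of_nat (ns0 u i)) u) sequentially"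
      by (auto simp: eventually_sequentially)
  qed
qed

lemma adm_ge: "adm_seq ns u \<Longrightarrow> eventually (\<lambda>i. N \<le> ns i) sequentially"
  unfolding adm_seq_def filterlim_at_top by blast

lemma adm_mod: "adm_seq ns u \<Longrightarrow> 0 < P \<Longrightarrow> eventually (\<lambda>i. ns i mod P = zproj u P) sequentially"
proof -
  assume a: "adm_seq ns u" and P: "0 < P"
  then have "eventually (\<lambda>i. zcong P (zhat_of_nat (ns i)) u) sequentially"
    unfolding adm_seq_def ztendsto_def by blast
  then show ?thesis
    by (rule eventually_mono) (simp add: zcong_def zproj_of_nat[OF P])
qed

lemma eventual_value:
  fixes h :: "zhat \<Rightarrow> zhat"
  assumes m: "0 < m" and P: "0 < P"
    and per: "\<forall>n\<ge>N. zcong m ((h^^(n+P)) x) ((h^^n) x)"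
    and adm: "adm_seq ns u"
  shows "eventually (\<lambda>i. zproj ((h^^ns i) x) m = zproj ((h^^(N*P + zproj u P)) x) m) sequentially"
proof -
  let ?a = "\<lambda>n. zproj ((h^^n) x) m"
  have pa: "\<forall>n\<ge>N. ?a (n + P) = ?a n" using per by (simp add: zcong_def)
  have "N*1 \<le> N*P" using P by (intro mult_le_mono2) simp
  then have K1: "N \<le> N*P + zproj u P" by linarith
  have K2: "(N*P + zproj u P) mod P = zproj u P" using P zproj_lt[OF P, of u] by simp
  show ?thesis
    using eventually_conj[OF adm_ge[OF adm, of N] adm_mod[OF adm P]]
  proof (rule eventually_mono)
    fix i assume "N \<le> ns i \<and> ns i mod P = zproj u P"
    then show "?a (ns i) = ?a (N*P + zproj u P)"
      using periodic_eq[OF pa _ K1] K2 by auto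
  qed
qed

lemma gl:
  fixes h :: "zhat \<Rightarrow> zhat"
  assumes H: "\<forall>m>0. \<exists>N P. 0 < P \<and> (\<forall>n\<ge>N. zcong m ((h^^(n+P)) x) ((h^^n) x))"
  shows "\<exists>L. \<forall>ns. adm_seq ns u \<longrightarrow> ztendsto (\<lambda>i. (h^^ns i) x) L"
proof -
  have ex: "\<exists>v. \<forall>ns. adm_seq ns u \<longrightarrow> eventually (\<lambda>i. zproj ((h^^ns i) x) m = v) sequentially"
    if m: "0 < m" for m
  proof -
    obtain N P where "0 < P" "\<forall>n\<ge>N. zcong m ((h^^(n+P)) x) ((h^^n) x)" using H m by blast
    then show ?thesis using eventual_value[OF m] by blast
  qed
  define v where "v m = (SOME v. \<forall>ns. adm_seq ns u \<longrightarrow> eventually (\<lambda>i. zproj ((h^^ns i) x) m = v) sequentially)" for m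
  have vp: "eventually (\<lambda>i. zproj ((h^^ns i) x) m = v m) sequentially" if "0 < m" "adm_seq ns u" for m ns
    using someI_ex[OF ex[OF that(1)]] that(2) unfolding v_def by blast
  define F where "F m = (if m = 0 then 0 else v m)" for m
  have F: "F \<in> zhat_rep"
    unfolding zhat_rep_def
  proof (intro CollectI conjI allI impI)
    show "F 0 = 0" by (simp add: F_def)
  next
    fix n :: nat assume n: "0 < n"
    obtain i where "zproj ((h^^ns0 u i) x) n = v n"
      using vp[OF n adm_ns0] by (auto simp: eventually_sequentially)
    then show "F n < n" using n zproj_lt[OF n] by (metis F_def less_not_refl2)
  next
    fix n m :: nat assume m: "0 < m" and d: "n dvd m"
    have n: "0 < n" using m d by (metis dvd_0_left_iff gr0I less_irrefl)
    obtain i where "zproj ((h^^ns0 u i) x) n = v n" "zproj ((h^^ns0 u i) x) m = v m"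
      using eventually_conj[OF vp[OF n adm_ns0] vp[OF m adm_ns0]]
      by (auto simp: eventually_sequentially)
    then show "F m mod n = F n" using zproj_dvd[OF m d, of "(h^^ns0 u i) x"] m n by (simp add: F_def)
  qed
  show ?thesis
  proof (intro exI allI impI)
    fix ns assume adm: "adm_seq ns u"
    show "ztendsto (\<lambda>i. (h^^ns i) x) (Abs_zhat F)"
      unfolding ztendsto_def zcong_def zproj_Abs[OF F]
    proof (intro allI impI)
      fix n :: nat assume n: "0 < n"
      show "eventually (\<lambda>i. zproj ((h^^ns i) x) n = F n) sequentially"
        using vp[OF n adm] n by (simp add: F_def)
    qed
  qed
qed

lemma zup_lim:
  assumes "\<exists>L. \<forall>ns. adm_seq ns u \<longrightarrow> ztendsto (\<lambda>i. (h^^ns i) x) L" "adm_seq ns u"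
  shows "ztendsto (\<lambda>i. (h^^ns i) x) (zup h x u)"
  using someI_ex[OF assms(1)] assms(2) unfolding zup_def by blast

section \<open>Orbit of s under f\<close>

definition orb :: "(zhat \<Rightarrow> zhat) \<Rightarrow> zhat \<Rightarrow> nat \<Rightarrow> nat \<Rightarrow> nat" where
  "orb f s m n = zproj ((f^^n) s) m"

definition per :: "(zhat \<Rightarrow> zhat) \<Rightarrow> zhat \<Rightarrow> nat \<Rightarrow> nat" where
  "per f s m = (LEAST l. 1 \<le> l \<and> (\<exists>k. orb f s m k = orb f s m (k + l)))"

lemma cp_step: "congruence_preserving f \<Longrightarrow> 0 < m \<Longrightarrow> zcong m a b \<Longrightarrow> zcong m (f a) (f b)"
  unfolding congruence_preserving_def by blast

lemma orb_prop:
  assumes cp: "congruence_preserving f" and m: "0 < m" and e: "orb f s m k = orb f s m k'"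
  shows "orb f s m (k + j) = orb f s m (k' + j)"
proof (induction j)
  case 0 then show ?case using e by simp
next
  case (Suc j)
  then have "zcong m ((f^^(k+j)) s) ((f^^(k'+j)) s)" by (simp add: orb_def zcong_def)
  then have "zcong m (f ((f^^(k+j)) s)) (f ((f^^(k'+j)) s))" by (rule cp_step[OF cp m])
  then show ?case by (simp add: orb_def zcong_def)
qed

lemma orb_periodic:
  assumes cp: "congruence_preserving f" and m: "0 < m" and e: "orb f s m k = orb f s m (k + l)"
  shows "\<forall>n\<ge>k. orb f s m (n + l) = orb f s m n"
proof (intro allI impI)
  fix n assume "k \<le> n"
  then have "orb f s m (k + (n - k)) = orb f s m ((k + l) + (n - k))"
    using orb_prop[OF cp m e] by blast
  then show "orb f s m (n + l) = orb f s m n" using \<open>k \<le> n\<close> by (simp add: algebra_simps)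
qed

lemma fib:
  assumes cp: "congruence_preserving f" and d: "0 < d" and q: "0 < q" and l: "1 \<le> l"
    and e: "orb f s d k0 = orb f s d (k0 + l)"
  shows "\<exists>k j. 1 \<le> j \<and> j \<le> q \<and> orb f s (d*q) k = orb f s (d*q) (k + j*l)"
proof -
  have dq: "0 < d*q" using d q by simp
  have pd: "\<forall>n\<ge>k0. orb f s d (n + l) = orb f s d n" by (rule orb_periodic[OF cp d e])
  define b where "b i = orb f s (d*q) (k0 + i*l)" for i
  have bmod: "b i mod d = orb f s d k0" for i
  proof -
    have "b i mod d = orb f s d (k0 + i*l)"
      unfolding b_def orb_def using zproj_dvd[OF dq, of d] by simp
    also have "\<dots> = orb f s d k0" using periodic_add[OF pd, of k0 i] by simp
    finally show ?thesis .
  qed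
  have blt: "b i < q*d" for i
    unfolding b_def orb_def using zproj_lt[OF dq] by (simp add: mult.commute)
  have "\<forall>i\<le>q. b i div d < q" using blt less_mult_imp_div_less by blast
  then obtain i j where ij: "i < j" "j \<le> q" "b i div d = b j div d"
    using pigeon[of q "\<lambda>i. b i div d"] by blast
  have "b i = b i div d * d + b i mod d" by simp
  also have "\<dots> = b j div d * d + b j mod d" using ij(3) bmod[of i] bmod[of j] by simp
  also have "\<dots> = b j" by simp
  finally have beq: "b i = b j" .
  have "i + (j - i) = j" using ij(1) by simp
  then have "i*l + (j - i)*l = j*l" by (metis add_mult_distrib)
  then have eq: "k0 + i*l + (j - i)*l = k0 + j*l" by simp
  have "orb f s (d*q) (k0 + i*l) = orb f s (d*q) (k0 + i*l + (j - i)*l)"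
    by (subst eq) (use beq in \<open>simp add: b_def\<close>)
  moreover have "1 \<le> j - i" "j - i \<le> q" using ij by auto
  ultimately show ?thesis by blast
qed

lemma per_ex:
  assumes cp: "congruence_preserving f" and m: "0 < m"
  shows "\<exists>k l. 1 \<le> l \<and> l \<le> m \<and> orb f s m k = orb f s m (k + l)"
proof -
  have "orb f s 1 0 = orb f s 1 (0 + 1)" by (simp add: orb_def zproj_Suc0)
  from fib[OF cp _ m _ this] obtain k j where "1 \<le> j" "j \<le> m" "orb f s m k = orb f s m (k + j)"
    by auto
  then show ?thesis by blast
qed

lemma per_props:
  assumes cp: "congruence_preserving f" and m: "0 < m"
  shows "1 \<le> per f s m \<and> per f s m \<le> m \<and> (\<exists>k. orb f s m k = orb f s m (k + per f s m))"
proof -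
  obtain k l where kl: "1 \<le> l" "l \<le> m" "orb f s m k = orb f s m (k + l)"
    using per_ex[OF cp m] by blast
  have P: "1 \<le> per f s m \<and> (\<exists>k. orb f s m k = orb f s m (k + per f s m))"
    unfolding per_def by (rule LeastI[of _ l]) (use kl in blast)
  have "per f s m \<le> l" unfolding per_def by (rule Least_le) (use kl in blast)
  then show ?thesis using P kl by auto
qed

lemma per_fib:
  assumes cp: "congruence_preserving f" and d: "0 < d" and q: "0 < q"
  shows "per f s (d*q) \<le> per f s d * q"
proof -
  obtain k0 where l: "1 \<le> per f s d" "orb f s d k0 = orb f s d (k0 + per f s d)"
    using per_props[OF cp d] by blast
  obtain k j where kj: "1 \<le> j" "j \<le> q" "orb f s (d*q) k = orb f s (d*q) (k + j * per f s d)"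
    using fib[OF cp d q l] by blast
  have "per f s (d*q) \<le> j * per f s d"
    unfolding per_def[of f s "d*q"] by (rule Least_le) (use kj l in auto)
  also have "\<dots> \<le> per f s d * q" using kj by (simp add: mult.commute)
  finally show ?thesis .
qed

lemma f_orbit_periodic:
  assumes cp: "congruence_preserving f" and m: "0 < m"
  shows "\<exists>N P. 0 < P \<and> (\<forall>n\<ge>N. zcong m ((f^^(n+P)) s) ((f^^n) s))"
proof -
  obtain k where k: "1 \<le> per f s m" "orb f s m k = orb f s m (k + per f s m)"
    using per_props[OF cp m] by blast
  have "\<forall>n\<ge>k. orb f s m (n + per f s m) = orb f s m n" by (rule orb_periodic[OF cp m k(2)])
  then have "\<forall>n\<ge>k. zcong m ((f^^(n + per f s m)) s) ((f^^n) s)" by (simp add: orb_def zcong_def)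
  then show ?thesis using k(1) by (intro exI[of _ k] exI[of _ "per f s m"]) simp
qed

lemma f_pp:
  assumes cp: "congruence_preserving f"
  shows "\<exists>L. \<forall>ns. adm_seq ns u \<longrightarrow> ztendsto (\<lambda>i. (f^^ns i) s) L"
  by (rule gl) (use f_orbit_periodic[OF cp] in blast)

lemma zup_f:
  assumes cp: "congruence_preserving f" and "adm_seq ns u"
  shows "ztendsto (\<lambda>i. (f^^ns i) s) (zup f s u)"
  by (rule zup_lim[OF f_pp[OF cp] assms(2)])

section \<open>The map g = f up s\<close>

definition dep :: "(zhat \<Rightarrow> zhat) \<Rightarrow> nat \<Rightarrow> nat \<Rightarrow> bool" where
  "dep h a b \<longleftrightarrow> (\<forall>y y'. zcong a y y' \<longrightarrow> zcong b (h y) (h y'))"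

lemma ev_zt: "ztendsto X L \<Longrightarrow> 0 < m \<Longrightarrow> eventually (\<lambda>i. zproj (X i) m = zproj L m) sequentially"
  unfolding ztendsto_def zcong_def by blast

lemma dep_g:
  assumes cp: "congruence_preserving f" and m: "0 < m"
  shows "dep (zup f s) (per f s m) m"
  unfolding dep_def
proof (intro allI impI)
  fix y y' assume yy: "zcong (per f s m) y y'"
  let ?p = "per f s m"
  obtain k where k: "1 \<le> ?p" "orb f s m k = orb f s m (k + ?p)"
    using per_props[OF cp m] by blast
  have pa: "\<forall>n\<ge>k. orb f s m (n + ?p) = orb f s m n" by (rule orb_periodic[OF cp m k(2)])
  have p0: "0 < ?p" using k(1) by simp
  have E: "eventually (\<lambda>i. zproj ((f^^ns0 y i) s) m = zproj (zup f s y) m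
     \<and> zproj ((f^^ns0 y' i) s) m = zproj (zup f s y') m
     \<and> k \<le> ns0 y i \<and> k \<le> ns0 y' i
     \<and> ns0 y i mod ?p = zproj y ?p \<and> ns0 y' i mod ?p = zproj y' ?p) sequentially"
    by (intro eventually_conj ev_zt[OF zup_f[OF cp adm_ns0] m] adm_ge[OF adm_ns0] adm_mod[OF adm_ns0 p0])
  then obtain i where i: "zproj ((f^^ns0 y i) s) m = zproj (zup f s y) m"
     "zproj ((f^^ns0 y' i) s) m = zproj (zup f s y') m"
     "k \<le> ns0 y i" "k \<le> ns0 y' i"
     "ns0 y i mod ?p = zproj y ?p" "ns0 y' i mod ?p = zproj y' ?p"
    by (auto simp: eventually_sequentially)
  have "orb f s m (ns0 y i) = orb f s m (ns0 y' i)"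
    using periodic_eq[OF pa i(3) i(4)] i(5,6) yy by (simp add: zcong_def)
  then show "zcong m (zup f s y) (zup f s y')"
    using i(1,2) by (simp add: orb_def zcong_def)
qed

lemma chain:
  assumes cp: "congruence_preserving f"
  shows "0 < m \<Longrightarrow> \<exists>M r. 0 < M \<and> dep (zup f s) M M \<and> dep (zup f s ^^ r) M m"
proof (induction m rule: less_induct)
  case (less m)
  have pp: "1 \<le> per f s m" "per f s m \<le> m" using per_props[OF cp less.prems, where s=s] by auto
  show ?case
  proof (cases "per f s m = m")
    case True
    then have "dep (zup f s) m m" using dep_g[OF cp less.prems, where s=s] by simp
    moreover have "dep (zup f s ^^ 0) m m" by (simp add: dep_def)
    ultimately show ?thesis using less.prems by blast
  next
    case False
    then have "per f s m < m" "0 < per f s m" using pp by auto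
    then obtain M r where Mr: "0 < M" "dep (zup f s) M M" "dep (zup f s ^^ r) M (per f s m)"
      using less.IH by blast
    have "dep (zup f s ^^ Suc r) M m"
      using Mr(3) dep_g[OF cp less.prems, where s=s] by (simp add: dep_def)
    then show ?thesis using Mr by blast
  qed
qed

lemma dep_orbit:
  assumes M: "0 < M" and d: "dep h M M"
  shows "\<exists>N P. 0 < P \<and> (\<forall>n\<ge>N. zcong M ((h^^(n+P)) x) ((h^^n) x))"
proof -
  have "\<forall>i\<le>M. zproj ((h^^i) x) M < M" using zproj_lt[OF M] by blast
  then obtain i j where ij: "i < j" "j \<le> M" "zproj ((h^^i) x) M = zproj ((h^^j) x) M"
    using pigeon[of M "\<lambda>i. zproj ((h^^i) x) M"] by blast
  have prp: "zcong M ((h^^(i+t)) x) ((h^^(j+t)) x)" for t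
  proof (induction t)
    case 0 then show ?case using ij(3) by (simp add: zcong_def)
  next
    case (Suc t) then show ?case using d by (simp add: dep_def)
  qed
  have "zcong M ((h^^(n + (j - i))) x) ((h^^n) x)" if "i \<le> n" for n
  proof -
    have "n + (j - i) = j + (n - i)" "n = i + (n - i)" using that ij(1) by auto
    then show ?thesis using prp[of "n - i"] by (metis zcong_def)
  qed
  then show ?thesis using ij(1) by (intro exI[of _ i] exI[of _ "j - i"]) auto
qed

lemma g_periodic:
  assumes cp: "congruence_preserving f" and m: "0 < m"
  shows "\<exists>N P. 0 < P \<and> (\<forall>n\<ge>N. zcong m ((zup f s ^^(n+P)) x) ((zup f s ^^n) x))"
proof -
  let ?g = "zup f s"
  obtain M r where Mr: "0 < M" "dep ?g M M" "dep (?g ^^ r) M m"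
    using chain[OF cp m] by blast
  obtain N P where NP: "0 < P" "\<forall>n\<ge>N. zcong M ((?g^^(n+P)) x) ((?g^^n) x)"
    using dep_orbit[OF Mr(1,2)] by blast
  have "zcong m ((?g^^(n+P)) x) ((?g^^n) x)" if "N + r \<le> n" for n
  proof -
    have e1: "n + P = r + (n - r + P)" "n = r + (n - r)" using that by auto
    have "N \<le> n - r" using that by simp
    then have "zcong M ((?g^^(n - r + P)) x) ((?g^^(n - r)) x)" using NP(2) by blast
    then have "zcong m ((?g^^r) ((?g^^(n - r + P)) x)) ((?g^^r) ((?g^^(n - r)) x))"
      using Mr(3) by (simp add: dep_def)
    then show ?thesis using e1 by (metis funpow_add comp_apply)
  qed
  then show ?thesis using NP(1) by blast
qed

lemma g_pp:
  assumes cp: "congruence_preserving f"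
  shows "\<exists>L. \<forall>ns. adm_seq ns u \<longrightarrow> ztendsto (\<lambda>i. (zup f s^^ns i) x) L"
  by (rule gl) (use g_periodic[OF cp] in blast)

lemma g_cont:
  assumes cp: "congruence_preserving f"
  shows "zcontinuous (zup f s)"
  unfolding zcontinuous_def
proof (intro allI impI)
  fix x and n :: nat assume n: "0 < n"
  have "0 < per f s n" using per_props[OF cp n, where s=s] by auto
  moreover have "dep (zup f s) (per f s n) n" by (rule dep_g[OF cp n])
  ultimately show "\<exists>m>0. \<forall>y. zcong m y x \<longrightarrow> zcong n (zup f s y) (zup f s x)"
    unfolding dep_def by blast
qed

section \<open>Tower-stable case\<close>

lemma red_iter:
  assumes cp: "congruence_preserving f" and p: "0 < p"
  shows "(red f p ^^ n) (zproj s p) = orb f s p n"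
proof (induction n)
  case 0 then show ?case by (simp add: orb_def)
next
  case (Suc n)
  have "zcong p (zhat_of_nat (zproj ((f^^n) s) p)) ((f^^n) s)"
    using zproj_lt[OF p] by (simp add: zcong_def zproj_of_nat[OF p])
  then have "zcong p (f (zhat_of_nat (zproj ((f^^n) s) p))) (f ((f^^n) s))"
    by (rule cp_step[OF cp p])
  then show ?case using Suc by (simp add: orb_def red_def zcong_def)
qed

lemma per_prime_lt:
  assumes cp: "congruence_preserving f" and ts: "tower_stable f" and p: "prime p"
  shows "per f s p < p"
proof -
  have p0: "0 < p" using p prime_gt_0_nat by blast
  have "per f s p = cycle_length (red f p) (zproj s p)"
    unfolding per_def cycle_length_def red_iter[OF cp p0] by simp
  moreover have "zproj s p \<in> {..<p}" using zproj_lt[OF p0] by simp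
  ultimately have "per f s p dvd period f p" unfolding period_def by (metis dvd_Lcm image_eqI)
  moreover have "\<not> p dvd period f p"
    using ts p unfolding tower_stable_def by (metis less_irrefl power_one_right)
  ultimately have "per f s p \<noteq> p" by auto
  then show ?thesis using per_props[OF cp p0, where s=s] by auto
qed

lemma per_lt:
  assumes cp: "congruence_preserving f" and ts: "tower_stable f" and m: "1 < m"
  shows "per f s m < m"
proof -
  obtain p where p: "prime p" "p dvd m" using m prime_factor_nat[of m] by auto
  then obtain q where q: "m = p * q" by (auto elim: dvdE)
  have q0: "0 < q" using q m by (cases q) auto
  have p0: "0 < p" using p prime_gt_0_nat by blast
  have "per f s m \<le> per f s p * q" using per_fib[OF cp p0 q0] q by simp
  also have "\<dots> < p * q" using per_prime_lt[OF cp ts p(1)] q0 by simp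
  finally show ?thesis using q by simp
qed

lemma chain2:
  assumes cp: "congruence_preserving f" and ts: "tower_stable f"
  shows "0 < m \<Longrightarrow> \<exists>r. \<forall>y y'. zcong m ((zup f s ^^ r) y) ((zup f s ^^ r) y')"
proof (induction m rule: less_induct)
  case (less m)
  show ?case
  proof (cases "m = 1")
    case True then show ?thesis using zcong_1 by blast
  next
    case False
    then have m1: "1 < m" using less.prems by simp
    have "per f s m < m" "0 < per f s m" using per_lt[OF cp ts m1, where s=s] per_props[OF cp less.prems, where s=s] by auto
    then obtain r where r: "\<forall>y y'. zcong (per f s m) ((zup f s ^^ r) y) ((zup f s ^^ r) y')"
      using less.IH by blast
    have "\<forall>y y'. zcong m ((zup f s ^^ Suc r) y) ((zup f s ^^ Suc r) y')"
      using r dep_g[OF cp less.prems, where s=s] by (simp add: dep_def)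
    then show ?thesis by blast
  qed
qed

lemma const_val:
  assumes cp: "congruence_preserving f" and ts: "tower_stable f" and m: "0 < m"
  shows "zproj (zup (zup f s) t u) m = zproj (zup (zup f s) (zhat_of_nat 0) (zhat_of_nat 0)) m"
proof -
  let ?g = "zup f s"
  obtain r where r: "\<forall>y y'. zcong m ((?g ^^ r) y) ((?g ^^ r) y')"
    using chain2[OF cp ts m] by blast
  have key: "zproj (zup ?g t u) m = zproj ((?g ^^ r) (zhat_of_nat 0)) m" for t u
  proof -
    have E: "eventually (\<lambda>i. zproj ((?g^^ns0 u i) t) m = zproj (zup ?g t u) m \<and> r \<le> ns0 u i) sequentially"
      by (intro eventually_conj ev_zt[OF zup_lim[OF g_pp[OF cp] adm_ns0] m] adm_ge[OF adm_ns0])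
    then obtain i where i: "zproj ((?g^^ns0 u i) t) m = zproj (zup ?g t u) m" "r \<le> ns0 u i"
      by (auto simp: eventually_sequentially)
    have "(?g^^ns0 u i) t = (?g^^r) ((?g^^(ns0 u i - r)) t)"
      using i(2) by (metis funpow_add comp_apply le_add_diff_inverse)
    then show ?thesis using i(1) r by (metis zcong_def)
  qed
  show ?thesis using key[of t u] key[of "zhat_of_nat 0" "zhat_of_nat 0"] by simp
qed

theorem theorem3p13:
  fixes f :: "zhat \<Rightarrow> zhat" and s :: zhat
  assumes "congruence_preserving f"
  shows "profinite_preperiodic (zup f s)
    \<and> (tower_stable f \<longrightarrow> (\<exists>c. \<forall>t u. zup (zup f s) t u = c))"
proof
  show "profinite_preperiodic (zup f s)"
    unfolding profinite_preperiodic_def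
    using g_cont[OF assms] g_pp[OF assms] by blast
next
  show "tower_stable f \<longrightarrow> (\<exists>c. \<forall>t u. zup (zup f s) t u = c)"
  proof
    assume ts: "tower_stable f"
    show "\<exists>c. \<forall>t u. zup (zup f s) t u = c"
    proof (intro exI allI)
      fix t u
      show "zup (zup f s) t u = zup (zup f s) (zhat_of_nat 0) (zhat_of_nat 0)"
        by (intro zhat_eq const_val[OF assms ts])
    qed
  qed
qed

end
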